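(* Let $p\ge 1$ and $n\ge p$ be integers. Then $$S_{n,s}\cap S_{n+1,s}=\varnothing\qquad\text{and}\qquad S_{n,s}\cap S_{n+2,s}=\varnothing .$$ That is, no real number $\Lambda$ is simultaneously an eigenvalue of order $n$ with an even eigenfunction and an eigenvalue of order $m$ with an even eigenfunction, when $m=n+1$ or $m=n+2$.
   Context: Fix an integer $p\ge 1$. For an integer $k\ge p$ and a real number $\Lambda$, define the differential operator on $[-1,1]$ $$L^{2k}(\Lambda)=(-1)^k\frac{d^{2k}}{dx^{2k}}-\Lambda(-1)^{k-p}\frac{d^{2k-2p}}{dx^{2k-2p}}.$$ A real number $\Lambda$ is an eigenvalue of order $k$ if there is a real function $z\in C^{2k}[-1,1]$, $z\not\equiv 0$, such that - $L^{2k}(\Lambda)z=0$ on $[-1,1]$, and - $z^{(j)}(-1)=z^{(j)}(1)=0$ for $j=0,\dots,k-1$. Such a $z$ is called an eigenfunction of order $k$ with eigenvalue $\Lambda$. These eigenvalues and eigenfunctions are exactly the critical values and critical points of the Rayleigh quotient $$\Phi_k(u)=\frac{\int_{-1}^1 (u^{(k)})^2\,dx}{\int_{-1}^1 (u^{(k-p)})^2\,dx}$$ on $\mathring W_2^k(-1,1)$. Here $\mathring W_2^k(-1,1)$ denotes the functions $u\in C^{k-1}[-1,1]$ with $u^{(j)}(\pm1)=0$ for $j<k$ and $u^{(k)}\in L_2$. Let $S_{k,s}$ (resp. $S_{k,a}$) denote the set of eigenvalues of order $k$ that admit an even (resp. odd) eigenfunction of order $k$. *)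

theory Defs
  imports "HOL-Analysis.Analysis"
begin

definition Cderivs :: "nat \<Rightarrow> (nat \<Rightarrow> real \<Rightarrow> real) \<Rightarrow> bool" where
  "Cderivs m D \<longleftrightarrow>
     (\<forall>j<m. \<forall>x\<in>{-1..1}. (D j has_real_derivative D (Suc j) x) (at x within {-1..1}))
     \<and> continuous_on {-1..1} (D m)"

definition eigenfunction :: "nat \<Rightarrow> nat \<Rightarrow> real \<Rightarrow> (real \<Rightarrow> real) \<Rightarrow> bool" where
  "eigenfunction p k \<Lambda> z \<longleftrightarrow> p \<le> k \<and>
     (\<exists>D. Cderivs (2*k) D \<and> (\<forall>x\<in>{-1..1}. D 0 x = z x) \<and>
        (\<forall>x\<in>{-1..1}. (-1)^k * D (2*k) x - \<Lambda> * (-1)^(k-p) * D (2*k-2*p) x = 0) \<and>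
        (\<forall>j<k. D j (-1) = 0 \<and> D j 1 = 0)) \<and>
     (\<exists>x\<in>{-1..1}. z x \<noteq> 0)"

definition S_s :: "nat \<Rightarrow> nat \<Rightarrow> real set" where
  "S_s p k = {\<Lambda>. \<exists>z. eigenfunction p k \<Lambda> z \<and> (\<forall>x\<in>{-1..1}. z (-x) = z x)}"

definition S_a :: "nat \<Rightarrow> nat \<Rightarrow> real set" where
  "S_a p k = {\<Lambda>. \<exists>z. eigenfunction p k \<Lambda> z \<and> (\<forall>x\<in>{-1..1}. z (-x) = - z x)}"

end

theory Submission imports Defs begin

definition smooth :: "(nat \<Rightarrow> real \<Rightarrow> real) \<Rightarrow> bool" where
 "smooth E \<longleftrightarrow> (\<forall>j. \<forall>x\<in>{-1..1}. (E j has_real_derivative E (Suc j) x) (at x within {-1..1}))"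

lemma smooth_cont: "smooth E \<Longrightarrow> continuous_on {-1..1} (E j)"
  unfolding smooth_def
  by (meson DERIV_continuous continuous_on_eq_continuous_within)

lemma ibp1:
  assumes "smooth F" "smooth G"
  shows "integral {-1..1} (\<lambda>x. F (Suc a) x * G b x) =
     F a 1 * G b 1 - F a (-1) * G b (-1) - integral {-1..1} (\<lambda>x. F a x * G (Suc b) x)"
proof -
  have d: "\<forall>x\<in>{-1..1}. ((\<lambda>x. F a x * G b x) has_vector_derivative
       (F (Suc a) x * G b x + F a x * G (Suc b) x)) (at x within {-1..1})"
  proof
    fix x :: real assume x: "x \<in> {-1..1}"
    have "((\<lambda>x. F a x * G b x) has_real_derivative
       (F (Suc a) x * G b x + G (Suc b) x * F a x)) (at x within {-1..1})"
      using assms x unfolding smooth_def by (intro DERIV_mult) auto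
    then show "((\<lambda>x. F a x * G b x) has_vector_derivative
       (F (Suc a) x * G b x + F a x * G (Suc b) x)) (at x within {-1..1})"
      by (simp add: has_real_derivative_iff_has_vector_derivative mult.commute)
  qed
  have h: "((\<lambda>x. F (Suc a) x * G b x + F a x * G (Suc b) x) has_integral
      (F a 1 * G b 1 - F a (-1) * G b (-1))) {-1..1}"
    using fundamental_theorem_of_calculus[of "-1" 1 "\<lambda>x. F a x * G b x"] d by simp
  have i1: "(\<lambda>x. F (Suc a) x * G b x) integrable_on {-1..1}"
    by (intro integrable_continuous_interval continuous_intros smooth_cont assms)
  have i2: "(\<lambda>x. F a x * G (Suc b) x) integrable_on {-1..1}"
    by (intro integrable_continuous_interval continuous_intros smooth_cont assms)
  have "integral {-1..1} (\<lambda>x. F (Suc a) x * G b x + F a x * G (Suc b) x) =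
        integral {-1..1} (\<lambda>x. F (Suc a) x * G b x) + integral {-1..1} (\<lambda>x. F a x * G (Suc b) x)"
    using i1 i2 by (rule integral_add)
  moreover note integral_unique[OF h]
  ultimately show ?thesis by linarith
qed

lemma ibp:
  assumes "smooth F" "smooth G"
  shows "integral {-1..1} (\<lambda>x. F (a+m) x * G b x) =
    (\<Sum>j<m. (-1)^j * (F (a+m-1-j) 1 * G (b+j) 1 - F (a+m-1-j) (-1) * G (b+j) (-1)))
    + (-1)^m * integral {-1..1} (\<lambda>x. F a x * G (b+m) x)"
proof (induction m arbitrary: a)
  case 0
  then show ?case by simp
next
  case (Suc m)
  have "integral {-1..1} (\<lambda>x. F (a + Suc m) x * G b x) = integral {-1..1} (\<lambda>x. F (Suc a + m) x * G b x)"
    by simp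
  also have "\<dots> = (\<Sum>j<m. (-1)^j * (F (Suc a+m-1-j) 1 * G (b+j) 1 - F (Suc a+m-1-j) (-1) * G (b+j) (-1)))
    + (-1)^m * integral {-1..1} (\<lambda>x. F (Suc a) x * G (b+m) x)" by (rule Suc.IH)
  also have "integral {-1..1} (\<lambda>x. F (Suc a) x * G (b+m) x) =
     F a 1 * G (b+m) 1 - F a (-1) * G (b+m) (-1) - integral {-1..1} (\<lambda>x. F a x * G (Suc (b+m)) x)"
    by (rule ibp1[OF assms])
  finally have e: "integral {-1..1} (\<lambda>x. F (a + Suc m) x * G b x) =
    (\<Sum>j<m. (-1)^j * (F (Suc a+m-1-j) 1 * G (b+j) 1 - F (Suc a+m-1-j) (-1) * G (b+j) (-1)))
    + (-1)^m * (F a 1 * G (b+m) 1 - F a (-1) * G (b+m) (-1))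
    + (-1)^(Suc m) * integral {-1..1} (\<lambda>x. F a x * G (b+Suc m) x)"
    by (simp add: algebra_simps)
  have "(\<Sum>j<Suc m. (-1)^j * (F (a+Suc m-1-j) 1 * G (b+j) 1 - F (a+Suc m-1-j) (-1) * G (b+j) (-1)))
     = (\<Sum>j<m. (-1)^j * (F (Suc a+m-1-j) 1 * G (b+j) 1 - F (Suc a+m-1-j) (-1) * G (b+j) (-1)))
    + (-1)^m * (F a 1 * G (b+m) 1 - F a (-1) * G (b+m) (-1))"
    by (simp add: sum.lessThan_Suc)
  with e show ?case by linarith
qed


lemma deriv_uniq:
  assumes "x \<in> {-1..1::real}"
    "(f has_real_derivative a) (at x within {-1..1})"
    "(f has_real_derivative b) (at x within {-1..1})"
  shows "a = b"
proof -
  have "(f has_vector_derivative a) (at x within cbox (-1) 1)"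
       "(f has_vector_derivative b) (at x within cbox (-1) 1)"
    using assms by (auto simp: has_real_derivative_iff_has_vector_derivative)
  then show ?thesis
    using vector_derivative_unique_within_closed_interval[of "-1" 1 x f a b] assms(1) by auto
qed

lemma parity:
  assumes "smooth E" "\<forall>x\<in>{-1..1}. E 0 (-x) = E 0 x"
  shows "\<forall>x\<in>{-1..1}. E j (-x) = (-1)^j * E j x"
proof (induction j)
  case 0
  then show ?case using assms by simp
next
  case (Suc j)
  show ?case
  proof
    fix x :: real assume x: "x \<in> {-1..1}"
    have mx: "-x \<in> {-1..1}" using x by auto
    have im: "uminus ` {-1..1::real} = {-1..1}" by auto
    have d1: "(E j has_real_derivative E (Suc j) (-x)) (at (uminus x) within (uminus ` {-1..1}))"
      using assms(1) mx im unfolding smooth_def by auto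
    have d2: "(uminus has_real_derivative -1) (at x within {-1..1})"
      by (rule derivative_eq_intros | simp)+
    have "((E j \<circ> uminus) has_real_derivative E (Suc j) (-x) * -1) (at x within {-1..1})"
      using DERIV_image_chain[OF d1 d2] .
    then have g: "((\<lambda>t. E j (-t)) has_real_derivative - E (Suc j) (-x)) (at x within {-1..1})"
      by (simp add: o_def)
    have h: "((\<lambda>t. (-1)^j * E j t) has_real_derivative (-1)^j * E (Suc j) x) (at x within {-1..1})"
      using assms(1) x unfolding smooth_def by (intro DERIV_cmult) auto
    have g2: "((\<lambda>t. (-1)^j * E j t) has_real_derivative - E (Suc j) (-x)) (at x within {-1..1})"
      by (rule has_field_derivative_transform_within[OF g zero_less_one x]) (use Suc in auto)
    have "- E (Suc j) (-x) = (-1)^j * E (Suc j) x" by (rule deriv_uniq[OF x g2 h])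
    then show "E (Suc j) (- x) = (-1) ^ Suc j * E (Suc j) x" by simp
  qed
qed

lemma zero_all:
  assumes "smooth E" "\<forall>x\<in>{-1..1}. E 0 x = 0"
  shows "\<forall>x\<in>{-1..1}. E j x = 0"
proof (induction j)
  case 0
  then show ?case using assms by simp
next
  case (Suc j)
  show ?case
  proof
    fix x :: real assume x: "x \<in> {-1..1}"
    have h: "(E j has_real_derivative E (Suc j) x) (at x within {-1..1})"
      using assms(1) x unfolding smooth_def by auto
    have g: "((\<lambda>t. 0) has_real_derivative 0) (at x within {-1..1})" by simp
    have g2: "(E j has_real_derivative 0) (at x within {-1..1})"
      by (rule has_field_derivative_transform_within[OF g zero_less_one x]) (use Suc in auto)
    show "E (Suc j) x = 0" using deriv_uniq[OF x g2 h] by simp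
  qed
qed

lemma vanish:
  assumes "smooth E" "\<forall>x\<in>{-1..1}. E k x = 0" "\<forall>j<k. E j 1 = 0"
  shows "\<forall>x\<in>{-1..1}. E 0 x = 0"
proof -
  have "\<forall>i\<le>k. \<forall>x\<in>{-1..1}. E (k-i) x = 0"
  proof (intro allI impI)
    fix i assume "i \<le> k"
    then show "\<forall>x\<in>{-1..1}. E (k-i) x = 0"
    proof (induction i)
      case 0
      then show ?case using assms by simp
    next
      case (Suc i)
      then have ih: "\<forall>x\<in>{-1..1}. E (k-i) x = 0" by simp
      have kk: "Suc (k - Suc i) = k - i" using Suc.prems by simp
      have d: "\<And>x. x \<in> {-1..1} \<Longrightarrow> (E (k - Suc i) has_derivative (\<lambda>h. 0)) (at x within {-1..1})"
      proof -
        fix x :: real assume x: "x \<in> {-1..1}"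
        have "(E (k - Suc i) has_real_derivative E (k-i) x) (at x within {-1..1})"
          using assms(1) x kk unfolding smooth_def by metis
        then have "(E (k - Suc i) has_real_derivative 0) (at x within {-1..1})" using ih x by simp
        moreover have "((*) (0::real)) = (\<lambda>h. 0)" by auto
        ultimately show "(E (k - Suc i) has_derivative (\<lambda>h. 0)) (at x within {-1..1})"
          by (simp add: has_field_derivative_def)
      qed
      show ?case
      proof
        fix x :: real assume x: "x \<in> {-1..1}"
        have "E (k - Suc i) x = E (k - Suc i) 1"
          by (rule has_derivative_zero_unique[OF convex_real_interval(5) d x]) auto
        also have "\<dots> = 0" using assms(3) Suc.prems by simp
        finally show "E (k - Suc i) x = 0" .
      qed
    qed
  qed
  then show ?thesis by (metis diff_self_eq_0 le_refl minus_nat.diff_0 order.refl diff_zero)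
qed


definition Bd :: "(nat\<Rightarrow>real\<Rightarrow>real) \<Rightarrow> (nat\<Rightarrow>real\<Rightarrow>real) \<Rightarrow> nat \<Rightarrow> nat \<Rightarrow> nat \<Rightarrow> real" where
 "Bd F G a b m = (\<Sum>j<m. (-1)^j * (F (a+m-1-j) 1 * G (b+j) 1 - F (a+m-1-j) (-1) * G (b+j) (-1)))"

lemma ibpB:
  assumes "smooth F" "smooth G"
  shows "integral {-1..1} (\<lambda>x. F (a+m) x * G b x) =
    Bd F G a b m + (-1)^m * integral {-1..1} (\<lambda>x. F a x * G (b+m) x)"
  using ibp[OF assms] unfolding Bd_def .

lemma Bzero:
  assumes "\<forall>j<m. (F (a+m-1-j) 1 = 0 \<or> G (b+j) 1 = 0) \<and> (F (a+m-1-j) (-1) = 0 \<or> G (b+j) (-1) = 0)"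
  shows "Bd F G a b m = 0"
  unfolding Bd_def using assms by (intro sum.neutral) auto

definition Sol :: "nat \<Rightarrow> nat \<Rightarrow> real \<Rightarrow> (nat \<Rightarrow> real \<Rightarrow> real) \<Rightarrow> bool" where
 "Sol p k c E \<longleftrightarrow> smooth E \<and> (\<forall>j\<ge>2*k. \<forall>x\<in>{-1..1}. E j x = c * E (j-2*p) x)"

lemma intc: "smooth F \<Longrightarrow> smooth G \<Longrightarrow> (\<lambda>x. F i x * G j x) integrable_on {-1..1}"
  by (intro integrable_continuous_interval continuous_intros smooth_cont)

lemma rigid:
  assumes p: "1 \<le> p" "p \<le> k" and S: "Sol p k c F" and bc: "\<forall>j\<le>k. F j 1 = 0 \<and> F j (-1) = 0"
  shows "\<forall>x\<in>{-1..1}. F 0 x = 0"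
proof -
  have sm: "smooth F" using S by (simp add: Sol_def)
  have rec: "\<And>j x. 2*k \<le> j \<Longrightarrow> x \<in> {-1..1} \<Longrightarrow> F j x = c * F (j-2*p) x" using S by (simp add: Sol_def)
  define G where "G = (\<lambda>j x. x * F (Suc j) x + real j * F j x)"
  have smG: "smooth G"
    unfolding smooth_def
  proof (intro allI ballI)
    fix j and x :: real assume x: "x \<in> {-1..1}"
    have d1: "(F (Suc j) has_real_derivative F (Suc (Suc j)) x) (at x within {-1..1})"
      and d2: "(F j has_real_derivative F (Suc j) x) (at x within {-1..1})"
      using sm x unfolding smooth_def by auto
    have "((\<lambda>t. t * F (Suc j) t + real j * F j t) has_real_derivative
        (1 * F (Suc j) x + F (Suc (Suc j)) x * x) + real j * F (Suc j) x) (at x within {-1..1})"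
      by (intro DERIV_add DERIV_mult DERIV_cmult d1 d2 DERIV_ident)
    moreover have "(1 * F (Suc j) x + F (Suc (Suc j)) x * x) + real j * F (Suc j) x = G (Suc j) x"
      unfolding G_def by (simp add: algebra_simps)
    ultimately show "(G j has_real_derivative G (Suc j) x) (at x within {-1..1})"
      unfolding G_def by metis
  qed
  have Gb: "\<And>j s. j < k \<Longrightarrow> s = 1 \<or> s = -1 \<Longrightarrow> G j s = 0"
    unfolding G_def using bc by auto
  have B1: "Bd F G 0 0 m = 0" if "m \<le> 2*k" for m
  proof (rule Bzero, intro allI impI)
    fix j assume j: "j < m"
    show "(F (0 + m - 1 - j) 1 = 0 \<or> G (0 + j) 1 = 0) \<and> (F (0 + m - 1 - j) (- 1) = 0 \<or> G (0 + j) (- 1) = 0)"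
    proof (cases "m - 1 - j \<le> k")
      case True then show ?thesis using bc by auto
    next
      case False then have "j < k" using that j by linarith
      then show ?thesis using Gb by auto
    qed
  qed
  define I where "I = (\<lambda>f::real\<Rightarrow>real. integral {-1..1::real} f)"
  have e1: "I (\<lambda>x. F (2*k) x * G 0 x) = I (\<lambda>x. F 0 x * G (2*k) x)"
    using ibpB[OF sm smG, of 0 "2*k" 0] B1[of "2*k"] unfolding I_def by simp
  have e2: "I (\<lambda>x. F (2*k-2*p) x * G 0 x) = I (\<lambda>x. F 0 x * G (2*k-2*p) x)"
    using ibpB[OF sm smG, of 0 "2*k-2*p" 0] B1[of "2*k-2*p"] unfolding I_def by simp
  have e3: "I (\<lambda>x. F (2*k) x * G 0 x) = c * I (\<lambda>x. F (2*k-2*p) x * G 0 x)"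
  proof -
    have "I (\<lambda>x. F (2*k) x * G 0 x) = I (\<lambda>x. c * (F (2*k-2*p) x * G 0 x))"
      unfolding I_def by (rule integral_cong) (use rec in auto)
    then show ?thesis unfolding I_def by simp
  qed
  have gg: "G (2*k) x = c * G (2*k-2*p) x + 2 * real p * F (2*k) x" if x: "x \<in> {-1..1}" for x
  proof -
    have a1: "F (Suc (2*k)) x = c * F (Suc (2*k-2*p)) x"
      using rec[of "Suc (2*k)" x] x p by (simp add: Suc_diff_le)
    have a2: "F (2*k) x = c * F (2*k-2*p) x" using rec[of "2*k" x] x by simp
    have r: "real (2*k-2*p) = 2 * real k - 2 * real p" using p by (simp add: of_nat_diff)
    show ?thesis unfolding G_def using a1 a2 r by (simp add: algebra_simps)
  qed
  have e4: "I (\<lambda>x. F 0 x * G (2*k) x) = c * I (\<lambda>x. F 0 x * G (2*k-2*p) x) + 2 * real p * I (\<lambda>x. F 0 x * F (2*k) x)"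
  proof -
    have "I (\<lambda>x. F 0 x * G (2*k) x) = I (\<lambda>x. c * (F 0 x * G (2*k-2*p) x) + 2 * real p * (F 0 x * F (2*k) x))"
      unfolding I_def by (rule integral_cong) (use gg in \<open>auto simp: algebra_simps\<close>)
    also have "\<dots> = I (\<lambda>x. c * (F 0 x * G (2*k-2*p) x)) + I (\<lambda>x. 2 * real p * (F 0 x * F (2*k) x))"
      unfolding I_def
      using integrable_on_cmult_left[OF intc[OF sm smG, of 0 "2*k-2*p"], of c]
        integrable_on_cmult_left[OF intc[OF sm sm, of 0 "2*k"], of "2 * real p"]
      by (intro integral_add) auto
    finally show ?thesis unfolding I_def by simp
  qed
  have z: "I (\<lambda>x. F 0 x * F (2*k) x) = 0"
    using e1 e2 e3 e4 p by simp
  have bz: "Bd F F k 0 k = 0" by (rule Bzero) (use bc in auto)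
  have "I (\<lambda>x. F (k+k) x * F 0 x) = (-1)^k * I (\<lambda>x. F k x * F k x)"
    using ibpB[OF sm sm, of k k 0] bz unfolding I_def by simp
  moreover have "I (\<lambda>x. F (k+k) x * F 0 x) = I (\<lambda>x. F 0 x * F (2*k) x)"
    unfolding I_def by (simp add: mult.commute mult_2[symmetric])
  ultimately have "I (\<lambda>x. F k x * F k x) = 0" using z by simp
  then have "\<forall>x\<in>{-1..1}. F k x * F k x = 0"
    unfolding I_def
    using smooth_cont[OF sm, of k]
    by (subst (asm) integral_eq_0_iff) (auto intro!: continuous_intros)
  then have "\<forall>x\<in>{-1..1}. F k x = 0" by simp
  then show ?thesis using vanish[OF sm] bc by auto
qed


lemma Sol_smooth: "Sol p k c E \<Longrightarrow> smooth E" by (simp add: Sol_def)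

lemma smooth_shift2: "smooth Y \<Longrightarrow> smooth (\<lambda>j. Y (j+2))"
  unfolding smooth_def by auto

lemma Sol_shift2:
  assumes "Sol p (Suc k) c Y" "p \<le> k"
  shows "Sol p k c (\<lambda>j. Y (j+2))"
  unfolding Sol_def
proof (intro conjI allI impI ballI)
  show "smooth (\<lambda>j. Y (j + 2))" using smooth_shift2 Sol_smooth assms(1) by blast
  fix j and x :: real assume j: "2*k \<le> j" and x: "x \<in> {-1..1}"
  have "Y (j+2) x = c * Y (j+2-2*p) x" using assms(1) j x unfolding Sol_def by auto
  moreover have "j+2-2*p = j-2*p+2" using j assms(2) by simp
  ultimately show "Y (j+2) x = c * Y (j-2*p+2) x" by simp
qed

lemma Sol_up: "Sol p k c E \<Longrightarrow> Sol p (Suc k) c E"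
  unfolding Sol_def by auto

lemma Sol_lin:
  assumes "Sol p k c E" "Sol p k c F"
  shows "Sol p k c (\<lambda>j x. a * E j x + b * F j x)"
  unfolding Sol_def
proof (intro conjI allI impI ballI)
  show "smooth (\<lambda>j x. a * E j x + b * F j x)"
    using assms unfolding Sol_def smooth_def
    by (auto intro!: DERIV_add DERIV_cmult)
  fix j and x :: real assume j: "2*k \<le> j" and x: "x \<in> {-1..1}"
  show "a * E j x + b * F j x = c * (a * E (j - 2 * p) x + b * F (j - 2 * p) x)"
    using assms j x unfolding Sol_def by (simp add: algebra_simps)
qed

lemma P1:
  assumes p: "1 \<le> p" "p \<le> n"
  and SE: "Sol p n c E" and bE: "\<forall>j<n. E j 1 = 0 \<and> E j (-1) = 0"
  and evE: "\<forall>x\<in>{-1..1}. E 0 (-x) = E 0 x" and nzE: "\<exists>x\<in>{-1..1}. E 0 x \<noteq> 0"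
  and SY: "Sol p (Suc n) c Y" and bY: "\<forall>j\<le>n. Y j 1 = 0 \<and> Y j (-1) = 0"
  and evY: "\<forall>x\<in>{-1..1}. Y 0 (-x) = Y 0 x" and nzY: "\<exists>x\<in>{-1..1}. Y 0 x \<noteq> 0"
  shows False
proof -
  have smE: "smooth E" and smY: "smooth Y" using SE SY by (auto simp: Sol_def)
  define W where "W = (\<lambda>j. Y (j+2))"
  have SW: "Sol p n c W" unfolding W_def by (rule Sol_shift2[OF SY p(2)])
  have smW: "smooth W" using SW by (simp add: Sol_def)
  have recE: "\<And>j x. 2*n \<le> j \<Longrightarrow> x \<in> {-1..1} \<Longrightarrow> E j x = c * E (j-2*p) x" using SE by (simp add: Sol_def)
  have recW: "\<And>j x. 2*n \<le> j \<Longrightarrow> x \<in> {-1..1} \<Longrightarrow> W j x = c * W (j-2*p) x" using SW by (simp add: Sol_def)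
  define I where "I = (\<lambda>f::real\<Rightarrow>real. integral {-1..1::real} f)"
  have g1: "I (\<lambda>x. E (2*n) x * W 0 x) = Bd E W 0 0 (2*n) + I (\<lambda>x. E 0 x * W (2*n) x)"
    using ibpB[OF smE smW, of 0 "2*n" 0] unfolding I_def by simp
  have g2: "I (\<lambda>x. E (2*n-2*p) x * W 0 x) = Bd E W 0 0 (2*n-2*p) + I (\<lambda>x. E 0 x * W (2*n-2*p) x)"
    using ibpB[OF smE smW, of 0 "2*n-2*p" 0] unfolding I_def by simp
  have h1: "I (\<lambda>x. E (2*n) x * W 0 x) = c * I (\<lambda>x. E (2*n-2*p) x * W 0 x)"
  proof -
    have "I (\<lambda>x. E (2*n) x * W 0 x) = I (\<lambda>x. c * (E (2*n-2*p) x * W 0 x))"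
      unfolding I_def by (rule integral_cong) (use recE in auto)
    then show ?thesis unfolding I_def by simp
  qed
  have h2: "I (\<lambda>x. E 0 x * W (2*n) x) = c * I (\<lambda>x. E 0 x * W (2*n-2*p) x)"
  proof -
    have "I (\<lambda>x. E 0 x * W (2*n) x) = I (\<lambda>x. c * (E 0 x * W (2*n-2*p) x))"
      unfolding I_def by (rule integral_cong) (use recW in auto)
    then show ?thesis unfolding I_def by simp
  qed
  have B2: "Bd E W 0 0 (2*n-2*p) = 0"
  proof (rule Bzero, intro allI impI)
    fix j assume j: "j < 2*n-2*p"
    show "(E (0 + (2*n-2*p) - 1 - j) 1 = 0 \<or> W (0 + j) 1 = 0) \<and> (E (0 + (2*n-2*p) - 1 - j) (- 1) = 0 \<or> W (0 + j) (- 1) = 0)"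
    proof (cases "2*n-2*p - 1 - j < n")
      case True then show ?thesis using bE by auto
    next
      case False then have "j+2 \<le> n" using j p by linarith
      then show ?thesis using bY unfolding W_def by auto
    qed
  qed
  have n1: "1 \<le> n" using p by simp
  define t where "t = (\<lambda>j::nat. (-1::real)^j * (E (0+2*n-1-j) 1 * W (0+j) 1 - E (0+2*n-1-j) (-1) * W (0+j) (-1)))"
  have B1: "Bd E W 0 0 (2*n) = t (n-1)"
  proof -
    have "Bd E W 0 0 (2*n) = sum t {..<2*n}" unfolding Bd_def t_def by simp
    also have "\<dots> = t (n-1) + sum t ({..<2*n} - {n-1})"
      by (rule sum.remove) (use n1 in auto)
    also have "sum t ({..<2*n} - {n-1}) = 0"
    proof (rule sum.neutral, rule ballI)
      fix j assume j: "j \<in> {..<2*n} - {n-1}"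
      show "t j = 0"
      proof (cases "n \<le> j")
        case True then have "0+2*n-1-j < n" using j by auto
        then show ?thesis unfolding t_def using bE by auto
      next
        case False then have "j+2 \<le> n" using j by auto
        then show ?thesis unfolding t_def W_def using bY by auto
      qed
    qed
    finally show ?thesis by simp
  qed
  have idx1: "0+2*n-1-(n-1) = n" using n1 by simp
  have idx2: "n - 1 + 2 = Suc n" using n1 by simp
  have pE: "E n (-1) = (-1)^n * E n 1" using parity[OF smE evE, of n] by auto
  have pY: "Y (Suc n) (-1) = (-1)^(Suc n) * Y (Suc n) 1" using parity[OF smY evY, of "Suc n"] by auto
  have "t (n-1) = (-1)^(n-1) * (E n 1 * Y (Suc n) 1 - E n (-1) * Y (Suc n) (-1))"
    unfolding t_def W_def using idx1 idx2 by simp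
  also have "\<dots> = (-1)^(n-1) * (2 * (E n 1 * Y (Suc n) 1))"
    using pE pY by (simp add: algebra_simps power_add[symmetric])
  finally have tt: "t (n-1) = (-1)^(n-1) * (2 * (E n 1 * Y (Suc n) 1))" .
  have "t (n-1) = 0" using g1 g2 h1 h2 B1 B2 by simp
  then have "E n 1 = 0 \<or> Y (Suc n) 1 = 0" using tt by simp
  then show False
  proof
    assume a: "E n 1 = 0"
    have "\<forall>j\<le>n. E j 1 = 0 \<and> E j (-1) = 0"
      using bE a pE by (metis le_neq_implies_less mult_zero_right)
    then have "\<forall>x\<in>{-1..1}. E 0 x = 0" using rigid[OF p SE] by blast
    then show False using nzE by blast
  next
    assume a: "Y (Suc n) 1 = 0"
    have "\<forall>j\<le>Suc n. Y j 1 = 0 \<and> Y j (-1) = 0"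
      using bY a pY by (metis le_SucE mult_zero_right)
    then have "\<forall>x\<in>{-1..1}. Y 0 x = 0" using rigid[OF p(1) _ SY] p by auto
    then show False using nzY by blast
  qed
qed


lemma P2:
  assumes p: "1 \<le> p" "p \<le> n"
  and SE: "Sol p n c E" and bE: "\<forall>j<n. E j 1 = 0 \<and> E j (-1) = 0"
  and evE: "\<forall>x\<in>{-1..1}. E 0 (-x) = E 0 x" and nzE: "\<exists>x\<in>{-1..1}. E 0 x \<noteq> 0"
  and SY: "Sol p (Suc (Suc n)) c Y" and bY: "\<forall>j\<le>Suc n. Y j 1 = 0 \<and> Y j (-1) = 0"
  and evY: "\<forall>x\<in>{-1..1}. Y 0 (-x) = Y 0 x" and nzY: "\<exists>x\<in>{-1..1}. Y 0 x \<noteq> 0"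
  shows False
proof -
  have smE: "smooth E" and smY: "smooth Y" using SE SY by (auto simp: Sol_def)
  have pE: "E n (-1) = (-1)^n * E n 1" using parity[OF smE evE, of n] by auto
  have En: "E n 1 \<noteq> 0"
  proof
    assume a: "E n 1 = 0"
    have "\<forall>j\<le>n. E j 1 = 0 \<and> E j (-1) = 0"
      using bE a pE by (metis le_neq_implies_less mult_zero_right)
    then have "\<forall>x\<in>{-1..1}. E 0 x = 0" using rigid[OF p SE] by blast
    then show False using nzE by blast
  qed
  define W where "W = (\<lambda>j. Y (j+2))"
  have SW: "Sol p (Suc n) c W" unfolding W_def by (rule Sol_shift2[OF SY]) (use p in simp)
  have SE': "Sol p (Suc n) c E" by (rule Sol_up[OF SE])
  define F where "F = (\<lambda>j x. E n 1 * W j x + (- W n 1) * E j x)"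
  have SF: "Sol p (Suc n) c F" unfolding F_def by (rule Sol_lin[OF SW SE'])
  have smF: "smooth F" using SF by (simp add: Sol_def)
  have pW: "Y (n+2) (-1) = (-1)^n * Y (n+2) 1" using parity[OF smY evY, of "n+2"] by auto
  have pY2: "\<forall>x\<in>{-1..1}. Y 2 (-x) = Y 2 x" using parity[OF smY evY, of 2] by auto
  have bF: "\<forall>j\<le>n. F j 1 = 0 \<and> F j (-1) = 0"
  proof (intro allI impI)
    fix j assume j: "j \<le> n"
    show "F j 1 = 0 \<and> F j (-1) = 0"
    proof (cases "j < n")
      case True then show ?thesis unfolding F_def W_def using bE bY by auto
    next
      case False then have "j = n" using j by simp
      then show ?thesis unfolding F_def W_def using pE pW by (simp add: algebra_simps)
    qed
  qed
  have evF: "\<forall>x\<in>{-1..1}. F 0 (-x) = F 0 x" unfolding F_def W_def using pY2 evE by (simp add: numeral_2_eq_2)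
  show False
  proof (cases "\<exists>x\<in>{-1..1}. F 0 x \<noteq> 0")
    case True
    show False by (rule P1[OF p SE bE evE nzE SF bF evF True])
  next
    case False
    then have z: "\<forall>j. \<forall>x\<in>{-1..1}. F j x = 0" using zero_all[OF smF] by blast
    define t where "t = Y (n+2) 1 / E n 1"
    have YE: "\<And>j x. x \<in> {-1..1} \<Longrightarrow> Y (j+2) x = t * E j x"
    proof -
      fix j and x :: real assume x: "x \<in> {-1..1}"
      have "E n 1 * Y (j+2) x - Y (n+2) 1 * E j x = 0" using z x unfolding F_def W_def by auto
      then show "Y (j+2) x = t * E j x" unfolding t_def using En by (simp add: field_simps)
    qed
    have SY1: "Sol p (Suc n) c Y"
      unfolding Sol_def
    proof (intro conjI allI impI ballI)
      show "smooth Y" by (rule smY)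
      fix j and x :: real assume j: "2 * Suc n \<le> j" and x: "x \<in> {-1..1}"
      define i where "i = j - 2"
      have i: "j = i + 2" "2*n \<le> i" using j unfolding i_def by auto
      have "Y j x = t * E i x" using YE[OF x] i by simp
      also have "\<dots> = t * (c * E (i - 2*p) x)" using SE i x by (simp add: Sol_def)
      also have "Y (j - 2*p) x = t * E (i - 2*p) x"
      proof -
        have "j - 2*p = (i - 2*p) + 2" using i p by simp
        then show ?thesis using YE[OF x] by simp
      qed
      ultimately show "Y j x = c * Y (j - 2*p) x" by simp
    qed
    have "\<forall>x\<in>{-1..1}. Y 0 x = 0" using rigid[OF p(1) _ SY1 bY] p by simp
    then show False using nzY by blast
  qed
qed


function extD :: "nat \<Rightarrow> nat \<Rightarrow> real \<Rightarrow> (nat \<Rightarrow> real \<Rightarrow> real) \<Rightarrow> nat \<Rightarrow> real \<Rightarrow> real" where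
  "extD p m c D j x = (if j \<le> m \<or> p = 0 then D j x else c * extD p m c D (j - 2*p) x)"
  by auto
termination by (relation "Wellfounded.measure (\<lambda>(p,m,c,D,j,x). j)") auto

declare extD.simps[simp del]

lemma extD_low: "j \<le> m \<Longrightarrow> extD p m c D j = D j"
  by (rule ext) (simp add: extD.simps)

lemma extD_high: "m < j \<Longrightarrow> 0 < p \<Longrightarrow> extD p m c D j = (\<lambda>x. c * extD p m c D (j-2*p) x)"
  by (rule ext) (subst extD.simps, simp)

lemma sign_lemma:
  assumes "p \<le> k"
  shows "(-1::real)^k * (-1)^(k-p) = (-1)^p"
proof -
  have "k + (k-p) = p + 2*(k-p)" using assms by simp
  then have "(-1::real)^k * (-1)^(k-p) = (-1)^(p + 2*(k-p))" by (metis power_add)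
  also have "\<dots> = (-1)^p" by (simp add: power_add power_mult)
  finally show ?thesis .
qed

lemma eig_Sol:
  assumes p1: "1 \<le> p" and ef: "eigenfunction p k \<Lambda> z" and ev: "\<forall>x\<in>{-1..1}. z (-x) = z x"
  shows "\<exists>E. Sol p k (\<Lambda> * (-1)^p) E \<and> (\<forall>j<k. E j 1 = 0 \<and> E j (-1) = 0)
     \<and> (\<forall>x\<in>{-1..1}. E 0 (-x) = E 0 x) \<and> (\<exists>x\<in>{-1..1}. E 0 x \<noteq> 0)"
proof -
  obtain D where pk: "p \<le> k" and CD: "Cderivs (2*k) D" and Dz: "\<forall>x\<in>{-1..1}. D 0 x = z x"
    and eq: "\<forall>x\<in>{-1..1}. (-1)^k * D (2*k) x - \<Lambda> * (-1)^(k-p) * D (2*k-2*p) x = 0"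
    and bc: "\<forall>j<k. D j (-1) = 0 \<and> D j 1 = 0" and nz: "\<exists>x\<in>{-1..1}. z x \<noteq> 0"
    using ef unfolding eigenfunction_def by blast
  define c where "c = \<Lambda> * (-1)^p"
  have eq': "D (2*k) x = c * D (2*k-2*p) x" if x: "x \<in> {-1..1}" for x
  proof -
    have "(-1)^k * ((-1)^k * D (2*k) x - \<Lambda> * (-1)^(k-p) * D (2*k-2*p) x) = 0" using eq x by simp
    then have "((-1::real)^k * (-1)^k) * D (2*k) x - \<Lambda> * ((-1)^k * (-1)^(k-p)) * D (2*k-2*p) x = 0"
      by (simp add: algebra_simps)
    then show ?thesis unfolding c_def using sign_lemma[OF pk]
      by (simp add: power_add[symmetric] power_mult[symmetric] algebra_simps)
  qed
  have dD: "\<And>j x. j < 2*k \<Longrightarrow> x \<in> {-1..1} \<Longrightarrow> (D j has_real_derivative D (Suc j) x) (at x within {-1..1})"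
    using CD unfolding Cderivs_def by blast
  define E where "E = extD p (2*k) c D"
  have p0: "0 < p" using p1 by simp
  have smE: "\<forall>x\<in>{-1..1}. (E j has_real_derivative E (Suc j) x) (at x within {-1..1})" for j
  proof (induction j rule: less_induct)
    case (less j)
    show ?case
    proof
      fix x :: real assume x: "x \<in> {-1..1}"
      consider "j < 2*k" | "j = 2*k" | "2*k < j" by linarith
      then show "(E j has_real_derivative E (Suc j) x) (at x within {-1..1})"
      proof cases
        case 1
        then show ?thesis unfolding E_def using extD_low[of j "2*k"] extD_low[of "Suc j" "2*k"] dD[OF 1 x] by simp
      next
        case 2
        have a: "E (Suc j) x = c * D (Suc (2*k-2*p)) x"
          unfolding E_def using 2 p0 pk extD_high[of "2*k" "Suc (2*k)" p c D] extD_low[of "Suc (2*k) - 2*p" "2*k"]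
          by (simp add: Suc_diff_le)
        have d: "((\<lambda>y. c * D (2*k-2*p) y) has_real_derivative c * D (Suc (2*k-2*p)) x) (at x within {-1..1})"
          using dD[of "2*k-2*p" x] x p0 pk by (intro DERIV_cmult) simp
        have d2: "(D (2*k) has_real_derivative c * D (Suc (2*k-2*p)) x) (at x within {-1..1})"
          by (rule has_field_derivative_transform_within[OF d zero_less_one x]) (use eq' in auto)
        show ?thesis using d2 a 2 unfolding E_def using extD_low[of "2*k" "2*k"] by simp
      next
        case 3
        have eE: "E j = (\<lambda>x. c * E (j-2*p) x)" unfolding E_def using extD_high[OF 3 p0] .
        have eS: "E (Suc j) x = c * E (Suc (j-2*p)) x"
          unfolding E_def using extD_high[of "2*k" "Suc j" p c D] 3 p0 pk by (simp add: Suc_diff_le)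
        have ih: "(E (j-2*p) has_real_derivative E (Suc (j-2*p)) x) (at x within {-1..1})"
          using less[of "j-2*p"] p0 3 x by auto
        show ?thesis unfolding eE eS by (intro DERIV_cmult ih)
      qed
    qed
  qed
  have SE: "Sol p k c E"
    unfolding Sol_def smooth_def
  proof (intro conjI allI impI ballI)
    fix j and x :: real assume x: "x \<in> {-1..1}"
    show "(E j has_real_derivative E (Suc j) x) (at x within {-1..1})" using smE x by blast
  next
    fix j and x :: real assume j: "2*k \<le> j" and x: "x \<in> {-1..1}"
    show "E j x = c * E (j - 2 * p) x"
    proof (cases "j = 2*k")
      case True then show ?thesis unfolding E_def using extD_low[of "2*k" "2*k"] extD_low[of "2*k-2*p" "2*k"] eq'[OF x] by simp
    next
      case False then have "2*k < j" using j by simp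
      then show ?thesis unfolding E_def using extD_high p0 by simp
    qed
  qed
  have E0: "E 0 = D 0" unfolding E_def by (rule extD_low) simp
  show ?thesis
  proof (intro exI conjI)
    show "Sol p k (\<Lambda> * (-1)^p) E" using SE unfolding c_def .
    show "\<forall>j<k. E j 1 = 0 \<and> E j (-1) = 0" unfolding E_def using bc extD_low by auto
    show "\<forall>x\<in>{-1..1}. E 0 (-x) = E 0 x" unfolding E0 using Dz ev by auto
    show "\<exists>x\<in>{-1..1}. E 0 x \<noteq> 0" unfolding E0 using Dz nz by auto
  qed
qed

theorem mainTheorem1:
  fixes p n :: nat
  assumes "1 \<le> p" and "p \<le> n"
  shows "S_s p n \<inter> S_s p (n+1) = {} \<and> S_s p n \<inter> S_s p (n+2) = {}"
proof (intro conjI equals0I)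
  fix \<Lambda> assume a: "\<Lambda> \<in> S_s p n \<inter> S_s p (n+1)"
  obtain z y where z: "eigenfunction p n \<Lambda> z" "\<forall>x\<in>{-1..1}. z (-x) = z x"
    and y: "eigenfunction p (n+1) \<Lambda> y" "\<forall>x\<in>{-1..1}. y (-x) = y x"
    using a unfolding S_s_def by blast
  obtain E where E: "Sol p n (\<Lambda> * (-1)^p) E" "\<forall>j<n. E j 1 = 0 \<and> E j (-1) = 0"
     "\<forall>x\<in>{-1..1}. E 0 (-x) = E 0 x" "\<exists>x\<in>{-1..1}. E 0 x \<noteq> 0"
    using eig_Sol[OF assms(1) z] by blast
  obtain Y where Y: "Sol p (Suc n) (\<Lambda> * (-1)^p) Y" "\<forall>j<Suc n. Y j 1 = 0 \<and> Y j (-1) = 0"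
     "\<forall>x\<in>{-1..1}. Y 0 (-x) = Y 0 x" "\<exists>x\<in>{-1..1}. Y 0 x \<noteq> 0"
    using eig_Sol[OF assms(1) y] by auto
  have bY: "\<forall>j\<le>n. Y j 1 = 0 \<and> Y j (-1) = 0" using Y(2) by auto
  show False by (rule P1[OF assms E(1-4) Y(1) bY Y(3-4)])
next
  fix \<Lambda> assume a: "\<Lambda> \<in> S_s p n \<inter> S_s p (n+2)"
  obtain z y where z: "eigenfunction p n \<Lambda> z" "\<forall>x\<in>{-1..1}. z (-x) = z x"
    and y: "eigenfunction p (n+2) \<Lambda> y" "\<forall>x\<in>{-1..1}. y (-x) = y x"
    using a unfolding S_s_def by blast
  obtain E where E: "Sol p n (\<Lambda> * (-1)^p) E" "\<forall>j<n. E j 1 = 0 \<and> E j (-1) = 0"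
     "\<forall>x\<in>{-1..1}. E 0 (-x) = E 0 x" "\<exists>x\<in>{-1..1}. E 0 x \<noteq> 0"
    using eig_Sol[OF assms(1) z] by blast
  obtain Y where Y: "Sol p (Suc (Suc n)) (\<Lambda> * (-1)^p) Y" "\<forall>j<Suc (Suc n). Y j 1 = 0 \<and> Y j (-1) = 0"
     "\<forall>x\<in>{-1..1}. Y 0 (-x) = Y 0 x" "\<exists>x\<in>{-1..1}. Y 0 x \<noteq> 0"
    using eig_Sol[OF assms(1) y] by auto
  have bY: "\<forall>j\<le>Suc n. Y j 1 = 0 \<and> Y j (-1) = 0" using Y(2) by auto
  show False by (rule P2[OF assms E(1-4) Y(1) bY Y(3-4)])
qed

end
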